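(* Let $0<t\leq 1$. For all $P,Q\in\mathbf{R}^3$ with $d_E(P,Q)<2t$, one has $\rho_t(P,Q)=d_E(P,Q)$.
   Context: $d_E$ denotes the Euclidean metric on $\mathbf{R}^3$. Fix $0<t\leq 1$ and let $\alpha=\sin^{-1}\!\left(\frac{\sqrt{2-t^2}-t}{2}\right)$. For $X,Y\in\mathbf{R}^3$ with $d_E(X,Y)\leq 2$, choose a sphere of radius $1$ with center $C$ containing $X$ and $Y$, let $X'=2C-X$, and define $$d_t(X,Y)=\begin{cases} d_E(X,Y) & \text{if } \angle XCY\leq \pi-2\alpha,\\ 2t+d_E(X',Y) & \text{if } \angle XCY>\pi-2\alpha,\end{cases}$$ which depends only on $s=d_E(X,Y)$ (since $\angle XCY=2\sin^{-1}(s/2)$ and $d_E(X',Y)=\sqrt{4-s^2}$). For $P,Q\in\mathbf{R}^3$ let $\Gamma_{P,Q}$ be the set of finite sequences $(X_0,\dots,X_n)$, $n\in\mathbf{N}$, in $\mathbf{R}^3$ with $X_0=P$, $X_n=Q$, $d_E(X_{i-1},X_i)\leq 2$ for $1\leq i\leq n$, and $$\rho_t(P,Q)=\inf_{(X_0,\dots,X_n)\in\Gamma_{P,Q}}\sum_{i=1}^n d_t(X_{i-1},X_i).$$ *)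

theory Defs
  imports "HOL-Analysis.Analysis"
begin

definition alpha_t :: "real \<Rightarrow> real" where
  "alpha_t t = arcsin ((sqrt (2 - t\<^sup>2) - t) / 2)"

text \<open>d_t(X,Y) as a function of s = d_E(X,Y) in [0,2]:
  angle XCY = 2 arcsin(s/2), and d_E(X',Y) = sqrt(4 - s^2).\<close>
definition d_t_of :: "real \<Rightarrow> real \<Rightarrow> real" where
  "d_t_of t s = (if 2 * arcsin (s / 2) \<le> pi - 2 * alpha_t t then s
                 else 2 * t + sqrt (4 - s\<^sup>2))"

definition d_t :: "real \<Rightarrow> real^3 \<Rightarrow> real^3 \<Rightarrow> real" where
  "d_t t X Y = d_t_of t (dist X Y)"

text \<open>Admissible chains from P to Q: sequences X_0..X_n (n in N, n = 0 allowed)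
  given as a function on {0..n}, with consecutive Euclidean distance at most 2.\<close>
definition chains :: "real^3 \<Rightarrow> real^3 \<Rightarrow> (nat \<times> (nat \<Rightarrow> real^3)) set" where
  "chains P Q = {(n, X). X 0 = P \<and> X n = Q \<and> (\<forall>i\<in>{1..n}. dist (X (i - 1)) (X i) \<le> 2)}"

definition rho_t :: "real \<Rightarrow> real^3 \<Rightarrow> real^3 \<Rightarrow> real" where
  "rho_t t P Q = Inf ((\<lambda>(n, X). \<Sum>i=1..n. d_t t (X (i - 1)) (X i)) ` chains P Q)"

end

theory Submission
  imports Defs
begin

lemma chain_tri:
  fixes X :: "nat \<Rightarrow> real^3"
  shows "dist (X 0) (X n) \<le> (\<Sum>i=1..n. dist (X (i - 1)) (X i))"
proof (induction n)
  case 0 then show ?case by simp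
next
  case (Suc n)
  have "dist (X 0) (X (Suc n)) \<le> dist (X 0) (X n) + dist (X n) (X (Suc n))"
    by (rule dist_triangle)
  also have "\<dots> \<le> (\<Sum>i=1..n. dist (X (i - 1)) (X i)) + dist (X n) (X (Suc n))"
    using Suc by simp
  also have "\<dots> = (\<Sum>i=1..Suc n. dist (X (i - 1)) (X i))" by simp
  finally show ?case .
qed

lemma dt_lower:
  assumes "0 < t" "0 \<le> s" "s \<le> 2"
  shows "d_t_of t s = s \<or> d_t_of t s \<ge> 2 * t"
proof -
  have "s\<^sup>2 \<le> 2\<^sup>2" using assms by (intro power_mono) auto
  then show ?thesis using assms by (auto simp: d_t_of_def)
qed

lemma dt_nonneg:
  assumes "0 < t" "0 \<le> s" "s \<le> 2"
  shows "d_t_of t s \<ge> 0"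
proof -
  have "s\<^sup>2 \<le> 2\<^sup>2" using assms by (intro power_mono) auto
  then show ?thesis using assms by (auto simp: d_t_of_def)
qed

lemma dt_small:
  assumes "0 < t" "t \<le> 1" "0 \<le> s" "s \<le> 2 * t"
  shows "d_t_of t s = s"
proof -
  define r where "r = sqrt (2 - t\<^sup>2)"
  have t2: "t\<^sup>2 \<le> 1" using assms by (simp add: power_le_one)
  have r0: "r \<ge> 0" and r2: "r\<^sup>2 = 2 - t\<^sup>2" using t2 by (auto simp: r_def)
  have rt: "t \<le> r"
  proof -
    have "t\<^sup>2 \<le> r\<^sup>2" using r2 t2 by simp
    then show ?thesis using r0 assms(1) by (meson power2_le_imp_le)
  qed
  define a where "a = (r - t) / 2"
  define b where "b = (r + t) / 2"
  have a0: "0 \<le> a" using rt by (simp add: a_def)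
  have ab: "a\<^sup>2 + b\<^sup>2 = 1"
  proof -
    have "a\<^sup>2 + b\<^sup>2 = (r\<^sup>2 + t\<^sup>2) / 2" unfolding a_def b_def
      by (simp add: power2_eq_square algebra_simps add_divide_distrib[symmetric])
    then show ?thesis using r2 by simp
  qed
  have b0: "0 \<le> b" using r0 assms by (simp add: b_def)
  have a1: "a \<le> 1" proof -
    have "a\<^sup>2 \<le> 1\<^sup>2" using ab zero_le_power2[of b] unfolding power_one by linarith
    then show ?thesis by (rule power2_le_imp_le) simp
  qed
  have b1: "b \<le> 1" proof -
    have "b\<^sup>2 \<le> 1\<^sup>2" using ab zero_le_power2[of a] unfolding power_one by linarith
    then show ?thesis by (rule power2_le_imp_le) simp
  qed
  have sb: "sqrt (1 - a\<^sup>2) = b" using ab b0 by (simp add: real_sqrt_unique)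
  have al: "alpha_t t = arcsin a" unfolding alpha_t_def a_def r_def ..
  have "arcsin a = pi/2 - arccos a" using a0 a1 by (simp add: arcsin_arccos_eq)
  moreover have "arccos a = arcsin b" using a0 a1 arccos_arcsin_sqrt_pos[of a] sb by simp
  ultimately have "pi - 2 * alpha_t t = 2 * arcsin b" using al by simp
  moreover have "arcsin (s/2) \<le> arcsin b"
  proof -
    have "s/2 \<le> b" using assms rt by (simp add: b_def)
    then show ?thesis using assms b0 b1 by (subst arcsin_le_mono) auto
  qed
  ultimately show ?thesis by (simp add: d_t_of_def)
qed

theorem corollary3:
  fixes t :: real and P Q :: "real^3"
  assumes "0 < t" and "t \<le> 1"
    and "dist P Q < 2 * t"
  shows "rho_t t P Q = dist P Q"
  unfolding rho_t_def
proof (rule cInf_eq_minimum)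
  let ?X = "\<lambda>i::nat. if i = 0 then P else Q"
  have c: "(1, ?X) \<in> chains P Q" using assms by (simp add: chains_def)
  have "d_t t P Q = dist P Q" unfolding d_t_def using assms by (intro dt_small) auto
  then show "dist P Q \<in> (\<lambda>(n, X). \<Sum>i=1..n. d_t t (X (i - 1)) (X i)) ` chains P Q"
    by (intro image_eqI[OF _ c]) simp
next
  fix x assume "x \<in> (\<lambda>(n, X). \<Sum>i=1..n. d_t t (X (i - 1)) (X i)) ` chains P Q"
  then obtain n X where nX: "(n, X) \<in> chains P Q" and x: "x = (\<Sum>i=1..n. d_t t (X (i - 1)) (X i))"
    by auto
  have X0: "X 0 = P" and Xn: "X n = Q" and st: "\<And>i. i \<in> {1..n} \<Longrightarrow> dist (X (i - 1)) (X i) \<le> 2"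
    using nX by (auto simp: chains_def)
  have nn: "\<And>i. i \<in> {1..n} \<Longrightarrow> d_t t (X (i - 1)) (X i) \<ge> 0"
    unfolding d_t_def using st assms by (intro dt_nonneg) auto
  show "dist P Q \<le> x"
  proof (cases "\<exists>i\<in>{1..n}. d_t t (X (i - 1)) (X i) \<noteq> dist (X (i - 1)) (X i)")
    case True
    then obtain j where j: "j \<in> {1..n}" and ne: "d_t t (X (j - 1)) (X j) \<noteq> dist (X (j - 1)) (X j)" by blast
    have big: "d_t t (X (j - 1)) (X j) \<ge> 2 * t"
      using dt_lower[of t "dist (X (j - 1)) (X j)"] st[OF j] ne assms by (auto simp: d_t_def)
    have "d_t t (X (j - 1)) (X j) \<le> x" unfolding x
      by (rule member_le_sum[OF j]) (use nn in auto)
    then show ?thesis using big assms by linarith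
  next
    case False
    then have eq: "\<And>i. i \<in> {1..n} \<Longrightarrow> d_t t (X (i - 1)) (X i) = dist (X (i - 1)) (X i)" by blast
    have "x = (\<Sum>i=1..n. dist (X (i - 1)) (X i))" unfolding x by (rule sum.cong[OF refl eq])
    moreover have "dist P Q = dist (X 0) (X n)" using X0 Xn by simp
    ultimately show ?thesis using chain_tri[of X n] by linarith
  qed
qed

end
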